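(* Let $(V,\|\cdot\|)$ be a normed plane and let $x,y\in V$ be distinct. Then $\mathrm{bis}(x,y)$ contains at most one line. If moreover $[xy]$ is parallel to some nondegenerate segment of the unit circle $S$ and $\mathrm{bis}(x,y)$ contains a line, then this line is the line through the centers of the two circles which contain $[xy]$ as a maximal segment.
   Context: A normed (Minkowski) plane $(V,\|\cdot\|)$ is a two-dimensional real vector space with a norm; $S=\{v:\|v\|=1\}$ is its unit circle. For distinct $x,y$, $\mathrm{bis}(x,y)=\{z\in V:\|z-x\|=\|z-y\|\}$. A circle with center $c$ and radius $\lambda>0$ is $c+\lambda S$. A maximal segment of a circle is a nondegenerate segment contained in the circle that is not properly contained in any other segment contained in that circle. Fact used in the statement: if $[xy]$ is parallel to a nondegenerate segment of $S$, then there are exactly two circles containing $[xy]$ as a maximal segment. *)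

theory Defs
  imports "HOL-Analysis.Analysis"
begin

definition is_norm :: "(real^2 \<Rightarrow> real) \<Rightarrow> bool" where
  "is_norm N \<longleftrightarrow>
     (\<forall>v. 0 \<le> N v) \<and> (\<forall>v. N v = 0 \<longleftrightarrow> v = 0) \<and>
     (\<forall>c v. N (c *\<^sub>R v) = \<bar>c\<bar> * N v) \<and>
     (\<forall>v w. N (v + w) \<le> N v + N w)"

definition unit_circle :: "(real^2 \<Rightarrow> real) \<Rightarrow> (real^2) set" where
  "unit_circle N = {v. N v = 1}"

definition bis :: "(real^2 \<Rightarrow> real) \<Rightarrow> real^2 \<Rightarrow> real^2 \<Rightarrow> (real^2) set" where
  "bis N x y = {z. N (z - x) = N (z - y)}"

definition ncircle :: "(real^2 \<Rightarrow> real) \<Rightarrow> real^2 \<Rightarrow> real \<Rightarrow> (real^2) set" where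
  "ncircle N c lam = {c + lam *\<^sub>R v | v. v \<in> unit_circle N}"

definition is_line :: "(real^2) set \<Rightarrow> bool" where
  "is_line L \<longleftrightarrow> (\<exists>p d. d \<noteq> 0 \<and> L = {p + t *\<^sub>R d | t. True})"

definition line_through :: "real^2 \<Rightarrow> real^2 \<Rightarrow> (real^2) set" where
  "line_through a b = {a + t *\<^sub>R (b - a) | t. True}"

definition maximal_segment :: "real^2 \<Rightarrow> real^2 \<Rightarrow> (real^2) set \<Rightarrow> bool" where
  "maximal_segment p q C \<longleftrightarrow>
     p \<noteq> q \<and> closed_segment p q \<subseteq> C \<and>
     (\<forall>u v. closed_segment u v \<subseteq> C \<and> closed_segment p q \<subseteq> closed_segment u v
            \<longrightarrow> closed_segment u v = closed_segment p q)"

definition parallel :: "real^2 \<Rightarrow> real^2 \<Rightarrow> bool" where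
  "parallel v w \<longleftrightarrow> (\<exists>c. v = c *\<^sub>R w)"

definition parallel_to_segment_of_S :: "(real^2 \<Rightarrow> real) \<Rightarrow> real^2 \<Rightarrow> real^2 \<Rightarrow> bool" where
  "parallel_to_segment_of_S N x y \<longleftrightarrow>
     (\<exists>a b. a \<noteq> b \<and> closed_segment a b \<subseteq> unit_circle N \<and> parallel (y - x) (b - a))"

end

theory Submission
  imports Defs
begin

definition cross :: "real^2 \<Rightarrow> real^2 \<Rightarrow> real" where
  "cross a b = a$1*b$2 - a$2*b$1"

lemma decomp:
  assumes "cross d u \<noteq> 0"
  shows "v = (cross v u / cross d u) *\<^sub>R d + (cross d v / cross d u) *\<^sub>R u"
proof -
  let ?D = "cross d u"
  have "v$i = (cross v u / ?D) * d$i + (cross d v / ?D) * u$i" if "i = 1 \<or> i = 2" for i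
  proof -
    have "(cross v u / ?D) * d$i + (cross d v / ?D) * u$i = (cross v u * d$i + cross d v * u$i) / ?D"
      by (simp add: add_divide_distrib)
    also have "cross v u * d$i + cross d v * u$i = v$i * ?D"
      using that by (auto simp: cross_def algebra_simps)
    finally show ?thesis using assms by simp
  qed
  then show ?thesis unfolding vec_eq_iff forall_2 by simp
qed

lemma par:
  assumes "cross d u = 0" "d \<noteq> 0"
  shows "\<exists>k. u = k *\<^sub>R d"
proof (cases "d$1 = 0")
  case True
  then have "d$2 \<noteq> 0" using assms(2) by (auto simp: vec_eq_iff forall_2)
  then show ?thesis using assms True
    by (intro exI[of _ "u$2/d$2"]) (auto simp: vec_eq_iff forall_2 cross_def field_simps)
next
  case False
  then show ?thesis using assms
    by (intro exI[of _ "u$1/d$1"]) (auto simp: vec_eq_iff forall_2 cross_def field_simps)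
qed

lemma cross_scale[simp]: "cross (a *\<^sub>R v) w = a * cross v w" "cross v (a *\<^sub>R w) = a * cross v w"
  "cross v v = 0" "cross (v + w) z = cross v z + cross w z"
  by (auto simp: cross_def algebra_simps)

lemma hh[simp]: "(1/2::real) *\<^sub>R (v * 2) = (v::real^2)"
  by (simp add: vec_eq_iff)

locale nrm = fixes N assumes isn: "is_norm N"
begin
lemma nn: "0 \<le> N v" and nz: "N v = 0 \<longleftrightarrow> v = 0" and hom: "N (c *\<^sub>R v) = \<bar>c\<bar> * N v"
  and tri: "N (v + w) \<le> N v + N w"
  using isn unfolding is_norm_def by auto

lemma neg: "N (- v) = N v"
  using hom[of "-1" v] by simp

lemma sym: "N (a - b) = N (b - a)"
  using neg[of "a - b"] by simp

lemma conv:
  assumes "a \<le> s" "s \<le> b" "a < b"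
  shows "(b - a) * N (w + s *\<^sub>R u) \<le> (b - s) * N (w + a *\<^sub>R u) + (s - a) * N (w + b *\<^sub>R u)"
proof -
  have e: "(b - a) *\<^sub>R (w + s *\<^sub>R u) = (b - s) *\<^sub>R (w + a *\<^sub>R u) + (s - a) *\<^sub>R (w + b *\<^sub>R u)"
    by (simp add: algebra_simps)
  have "(b - a) * N (w + s *\<^sub>R u) = N ((b - a) *\<^sub>R (w + s *\<^sub>R u))"
    using assms by (simp add: hom)
  also have "\<dots> \<le> N ((b - s) *\<^sub>R (w + a *\<^sub>R u)) + N ((s - a) *\<^sub>R (w + b *\<^sub>R u))"
    unfolding e by (rule tri)
  also have "\<dots> = (b - s) * N (w + a *\<^sub>R u) + (s - a) * N (w + b *\<^sub>R u)"
    using assms by (simp add: hom)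
  finally show ?thesis .
qed

lemma no_u_line:
  assumes "u \<noteq> 0" "\<And>s. N (a + s *\<^sub>R u) = N (a + (s - 1) *\<^sub>R u)"
  shows False
proof -
  have I: "N (a + real n *\<^sub>R u) = N a" for n
  proof (induction n)
    case (Suc n)
    then show ?case using assms(2)[of "real (Suc n)"] by simp
  qed simp
  have pu: "N u > 0" using assms(1) nn[of u] nz[of u] by auto
  obtain n where n: "real n > 2 * N a / N u" using reals_Archimedean2 by blast
  have "N (real n *\<^sub>R u) \<le> N (a + real n *\<^sub>R u) + N (- a)"
    using tri[of "a + real n *\<^sub>R u" "-a"] by simp
  then have "real n * N u \<le> 2 * N a" using I[of n] by (simp add: hom neg)
  with n pu show False by (simp add: field_simps)
qed

lemma key1:
  assumes "u \<noteq> 0" "0 < c" "c < 1"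
    and h1: "N (w + (1/2) *\<^sub>R u) = N (w + (-1/2) *\<^sub>R u)"
    and h2: "N (w + (c + 1/2) *\<^sub>R u) = N (w + (c - 1/2) *\<^sub>R u)"
  shows "N u \<le> 2 * N w"
proof -
  define A where "A = N (w + (1/2) *\<^sub>R u)"
  define B where "B = N (w + (c + 1/2) *\<^sub>R u)"
  have 1: "(1/2 - (-1/2)) * N (w + (c - 1/2) *\<^sub>R u) \<le> (1/2 - (c - 1/2)) * N (w + (-1/2) *\<^sub>R u) + ((c - 1/2) - (-1/2)) * N (w + (1/2) *\<^sub>R u)"
    by (rule conv) (use assms in auto)
  have BA: "B \<le> A" using 1 h1 h2 unfolding A_def B_def by (simp add: algebra_simps)
  have 2: "((c + 1/2) - 0) * N (w + (1/2) *\<^sub>R u) \<le> ((c+1/2) - 1/2) * N (w + 0 *\<^sub>R u) + (1/2 - 0) * N (w + (c + 1/2) *\<^sub>R u)"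
    by (rule conv) (use assms in auto)
  then have "c * A \<le> c * N w" using BA unfolding A_def B_def by (simp add: algebra_simps)
  then have AN: "A \<le> N w" using assms(2) by simp
  have ue: "u = (w + (1/2) *\<^sub>R u) + (- (w + (-1/2) *\<^sub>R u))"
  proof -
    have "(w + (1/2) *\<^sub>R u) + (- (w + (-1/2) *\<^sub>R u)) = (1/2) *\<^sub>R u + (1/2) *\<^sub>R u"
      by simp
    also have "\<dots> = (1/2 + 1/2) *\<^sub>R u" by (rule scaleR_add_left[symmetric])
    finally show ?thesis by simp
  qed
  have "N u \<le> N (w + (1/2) *\<^sub>R u) + N (- (w + (-1/2) *\<^sub>R u))"
    by (subst ue) (rule tri)
  then have "N u \<le> 2 * A" using h1 sym[of "(1/2) *\<^sub>R u" w] unfolding A_def by (simp add: neg)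
  with AN show ?thesis by simp
qed

lemma circ: assumes "lam > 0" shows "z \<in> ncircle N c lam \<longleftrightarrow> N (z - c) = lam"
proof
  assume "z \<in> ncircle N c lam"
  then obtain v where "z = c + lam *\<^sub>R v" "N v = 1" unfolding ncircle_def unit_circle_def by auto
  then show "N (z - c) = lam" using assms by (simp add: hom)
next
  assume h: "N (z - c) = lam"
  have "z = c + lam *\<^sub>R ((1/lam) *\<^sub>R (z - c))" using assms by simp
  moreover have "N ((1/lam) *\<^sub>R (z - c)) = 1" using assms h by (simp add: hom)
  ultimately show "z \<in> ncircle N c lam" unfolding ncircle_def unit_circle_def by blast
qed


lemma maxseg_gt:
  assumes lp: "lam > 0" and ms: "maximal_segment x y (ncircle N c lam)" and s: "s > 0"
  shows "N (c - x + s *\<^sub>R (y - x)) > lam"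
proof (rule ccontr)
  assume "\<not> ?thesis"
  then have Fs: "N (c - x + s *\<^sub>R (y - x)) \<le> lam" by simp
  define u where "u = y - x"
  define F where "F t = N (c - x + t *\<^sub>R u)" for t
  have xy: "x \<noteq> y" and sub: "closed_segment x y \<subseteq> ncircle N c lam"
    and mx: "\<And>a b. closed_segment a b \<subseteq> ncircle N c lam \<and> closed_segment x y \<subseteq> closed_segment a b
            \<Longrightarrow> closed_segment a b = closed_segment x y"
    using ms unfolding maximal_segment_def by blast+
  have "N (x - c) = lam" using sub circ[OF lp] by auto
  then have F0: "F 0 = lam" unfolding F_def using sym[of x c] by simp
  have "N (y - c) = lam" using sub circ[OF lp] by auto
  then have F1: "F (-1) = lam" unfolding F_def u_def using sym[of y c] by (simp add: algebra_simps)
  have Fc: "F t = lam" if "0 \<le> t" "t \<le> s" for t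
  proof -
    have a: "(s - 0) * F t \<le> (s - t) * F 0 + (t - 0) * F s"
      unfolding F_def by (rule conv) (use that s in auto)
    have b: "(t - (-1)) * F 0 \<le> (t - 0) * F (-1) + (0 - (-1)) * F t"
      unfolding F_def by (rule conv) (use that in auto)
    have "F s \<le> lam" using Fs unfolding F_def u_def .
    then have "t * F s \<le> t * lam" using that by (simp add: mult_left_mono)
    have "(s - 0) * F t \<le> (s - t) * lam + t * F s" using a F0 by simp
    then have "(s - 0) * F t \<le> (s - t) * lam + t * lam" using \<open>t * F s \<le> t * lam\<close> by linarith
    then have "F t \<le> lam" using s by (simp add: algebra_simps)
    moreover have "F t \<ge> lam" using b F0 F1 by (simp add: algebra_simps)
    ultimately show ?thesis by simp
  qed
  define a where "a = x - s *\<^sub>R u"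
  have seg: "closed_segment a y \<subseteq> ncircle N c lam"
  proof
    fix z assume "z \<in> closed_segment a y"
    then obtain th where th: "0 \<le> th" "th \<le> 1" "z = (1 - th) *\<^sub>R a + th *\<^sub>R y"
      unfolding closed_segment_def by auto
    define tau where "tau = th * (1 + s) - s"
    have z: "z = x + tau *\<^sub>R u" unfolding th(3) tau_def a_def u_def by (simp add: algebra_simps)
    show "z \<in> ncircle N c lam"
    proof (cases "tau \<ge> 0")
      case True
      have "th * (1 + s) \<le> 1 * (1 + s)" using th s by (intro mult_right_mono) auto
      then have "tau \<le> 1" unfolding tau_def by simp
      then have "z \<in> closed_segment x y" unfolding z closed_segment_def u_def using True
        by (intro CollectI exI[of _ tau]) (auto simp: algebra_simps)
      then show ?thesis using sub by auto
    next
      case False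
      have "- tau \<le> s" unfolding tau_def using th s by (simp add: mult_nonneg_nonneg)
      then have "F (- tau) = lam" using False Fc by simp
      then have "N (z - c) = lam" unfolding F_def z
        using sym[of "x + tau *\<^sub>R u" c] by (simp add: algebra_simps)
      then show ?thesis using circ[OF lp] by simp
    qed
  qed
  have "x \<in> closed_segment a y"
  proof -
    define th where "th = s / (1 + s)"
    have th01: "0 \<le> th" "th \<le> 1" unfolding th_def using s by auto
    have co: "th - (1 - th) * s = 0" unfolding th_def using s by (simp add: field_simps)
    have "(1 - th) *\<^sub>R a + th *\<^sub>R y = x + (th - (1 - th) * s) *\<^sub>R u"
      unfolding a_def u_def by (simp add: algebra_simps)
    then have "x = (1 - th) *\<^sub>R a + th *\<^sub>R y" using co by simp
    then show ?thesis unfolding closed_segment_def using th01 by blast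
  qed
  then have "closed_segment x y \<subseteq> closed_segment a y"
    by (simp add: closed_segment_subset)
  then have "closed_segment a y = closed_segment x y" using mx seg by blast
  then have "a \<in> closed_segment x y" by (metis ends_in_segment(1))
  then obtain th where th: "0 \<le> th" "th \<le> 1" "a = (1 - th) *\<^sub>R x + th *\<^sub>R y"
    unfolding closed_segment_def by auto
  then have "(th + s) *\<^sub>R u = 0" unfolding a_def u_def by (simp add: algebra_simps)
  moreover have "u \<noteq> 0" using xy u_def by simp
  ultimately show False using th s by simp
qed

lemma center_unique:
  assumes lp: "lam > 0" and ms: "maximal_segment x y (ncircle N c lam)"
    and h: "N (c + s0 *\<^sub>R (y - x) - x) = N (c + s0 *\<^sub>R (y - x) - y)"
  shows "s0 = 0"
proof (rule ccontr)
  assume s0: "s0 \<noteq> 0"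
  define u where "u = y - x"
  define F where "F t = N (c - x + t *\<^sub>R u)" for t
  have sub: "closed_segment x y \<subseteq> ncircle N c lam"
    using ms unfolding maximal_segment_def by blast
  have "N (x - c) = lam" using sub circ[OF lp] by auto
  then have F0: "F 0 = lam" unfolding F_def using sym[of x c] by simp
  have "N (y - c) = lam" using sub circ[OF lp] by auto
  then have F1: "F (-1) = lam" unfolding F_def u_def using sym[of y c] by (simp add: algebra_simps)
  have gt: "F t > lam" if "t > 0" for t
    using maxseg_gt[OF lp ms that] unfolding F_def u_def .
  have ms2: "maximal_segment y x (ncircle N c lam)"
    using ms unfolding maximal_segment_def closed_segment_commute[of y x] by metis
  have gt2: "F (-1 - t) > lam" if "t > 0" for t
  proof -
    have e: "c - y + t *\<^sub>R (x - y) = c - x + (-1 - t) *\<^sub>R u" unfolding u_def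
      by (simp add: algebra_simps)
    show ?thesis unfolding F_def e[symmetric] using maxseg_gt[OF lp ms2 that] .
  qed
  have le: "F t \<le> lam" if "-1 \<le> t" "t \<le> 0" for t
  proof -
    have "(0 - (-1)) * F t \<le> (0 - t) * F (-1) + (t - (-1)) * F 0"
      unfolding F_def by (rule conv) (use that in auto)
    then show ?thesis using F0 F1 by (simp add: algebra_simps)
  qed
  have hF: "F s0 = F (s0 - 1)"
  proof -
    have e1: "c + s0 *\<^sub>R (y - x) - x = c - x + s0 *\<^sub>R u" unfolding u_def by (simp add: algebra_simps)
    have e2: "c + s0 *\<^sub>R (y - x) - y = c - x + (s0 - 1) *\<^sub>R u" unfolding u_def by (simp add: algebra_simps)
    show ?thesis unfolding F_def e1[symmetric] e2[symmetric] by (rule h)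
  qed
  show False
  proof (cases "s0 > 0")
    case True
    then have A: "F s0 > lam" by (rule gt)
    show False
    proof (cases "s0 \<le> 1")
      case True
      then show False using le[of "s0 - 1"] A hF \<open>s0 > 0\<close> by simp
    next
      case False
      then have B: "F (s0 - 1) > lam" using gt[of "s0 - 1"] by simp
      have "(s0 - 0) * F (s0 - 1) \<le> (s0 - (s0 - 1)) * F 0 + ((s0 - 1) - 0) * F s0"
        unfolding F_def by (rule conv) (use False in auto)
      then have "s0 * F (s0 - 1) \<le> lam + (s0 - 1) * F (s0 - 1)" using F0 hF by simp
      then have "F (s0 - 1) \<le> lam" by (simp add: algebra_simps)
      then show False using B by simp
    qed
  next
    case False
    then have neg: "s0 < 0" using s0 by simp
    have A: "F (s0 - 1) > lam" using gt2[of "- s0"] neg by simp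
    show False
    proof (cases "s0 \<ge> -1")
      case True
      then show False using le[of s0] A hF neg by simp
    next
      case False
      then have B: "F s0 > lam" using gt2[of "-1 - s0"] by simp
      have "(-1 - (s0 - 1)) * F s0 \<le> (-1 - s0) * F (s0 - 1) + (s0 - (s0 - 1)) * F (-1)"
        unfolding F_def by (rule conv) (use False in auto)
      then have "(- s0) * F s0 \<le> (-1 - s0) * F s0 + lam" using F1 hF by simp
      then have "F s0 \<le> lam" by (simp add: algebra_simps)
      then show False using B by simp
    qed
  qed
qed

lemma transversal:
  assumes u: "y - x \<noteq> 0" and d: "d \<noteq> 0" and L: "{p + t *\<^sub>R d | t. True} \<subseteq> bis N x y"
  shows "cross d (y - x) \<noteq> 0"
proof
  assume "cross d (y - x) = 0"
  then obtain k where k: "y - x = k *\<^sub>R d" using par d by blast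
  have "N (p - x + s *\<^sub>R (y - x)) = N (p - x + (s - 1) *\<^sub>R (y - x))" for s
  proof -
    have "p + (s * k) *\<^sub>R d \<in> bis N x y" using L by blast
    then have h: "N (p + (s * k) *\<^sub>R d - x) = N (p + (s * k) *\<^sub>R d - y)" unfolding bis_def by simp
    have e1: "p + (s * k) *\<^sub>R d - x = p - x + s *\<^sub>R (y - x)" unfolding k by (simp add: algebra_simps)
    have e2: "p + (s * k) *\<^sub>R d - y = p - x + (s - 1) *\<^sub>R (y - x)"
    proof -
      have "y = x + k *\<^sub>R d" using k by (simp add: algebra_simps)
      then show ?thesis unfolding k by (simp add: algebra_simps)
    qed
    show ?thesis using h unfolding e1 e2 .
  qed
  then show False using no_u_line[OF u] by blast
qed

lemma meets:
  assumes "cross d u \<noteq> 0"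
  shows "\<exists>\<beta>. q + \<beta> *\<^sub>R u \<in> {p + t *\<^sub>R d | t. True}"
proof -
  define al where "al = cross (p - q) u / cross d u"
  define be where "be = cross d (p - q) / cross d u"
  have "p - q = al *\<^sub>R d + be *\<^sub>R u" unfolding al_def be_def by (rule decomp[OF assms])
  then have "q + be *\<^sub>R u = p + (- al) *\<^sub>R d" by (simp add: algebra_simps)
  then show ?thesis by blast
qed

lemma through_m:
  assumes u: "y - x \<noteq> 0" and d: "d \<noteq> 0" and L: "{p + t *\<^sub>R d | t. True} \<subseteq> bis N x y"
  shows "x + (1/2) *\<^sub>R (y - x) \<in> {p + t *\<^sub>R d | t. True}"
proof -
  define u where "u = y - x"
  define m where "m = x + (1/2) *\<^sub>R u"
  have cr: "cross d u \<noteq> 0" using transversal[OF u d L] u_def by simp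
  obtain be where be: "m + be *\<^sub>R u \<in> {p + t *\<^sub>R d | t. True}" using meets[OF cr] by blast
  then have "m + be *\<^sub>R u \<in> bis N x y" using L by blast
  then have h: "N (m + be *\<^sub>R u - x) = N (m + be *\<^sub>R u - y)" unfolding bis_def by simp
  have e1: "m + be *\<^sub>R u - x = (1/2 + be) *\<^sub>R u" unfolding m_def by (simp add: algebra_simps)
  have e2: "m + be *\<^sub>R u - y = (be - 1/2) *\<^sub>R u"
  proof -
    have "y = x + u" unfolding u_def by simp
    then show ?thesis unfolding m_def by (simp add: algebra_simps)
  qed
  have "\<bar>1/2 + be\<bar> * N u = \<bar>be - 1/2\<bar> * N u" using h unfolding e1 e2 hom .
  moreover have "N u > 0" using u u_def nn[of u] nz[of u] by auto
  ultimately have "\<bar>1/2 + be\<bar> = \<bar>be - 1/2\<bar>" by simp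
  then have "be = 0" by (simp add: abs_if split: if_splits)
  then show ?thesis using be unfolding m_def u_def by simp
qed

lemma center_on_L:
  assumes u: "y - x \<noteq> 0" and d: "d \<noteq> 0" and L: "{p + t *\<^sub>R d | t. True} \<subseteq> bis N x y"
    and lp: "lam > 0" and ms: "maximal_segment x y (ncircle N c lam)"
  shows "c \<in> {p + t *\<^sub>R d | t. True}"
proof -
  have cr: "cross d (y - x) \<noteq> 0" using transversal[OF u d L] by simp
  obtain be where be: "c + be *\<^sub>R (y - x) \<in> {p + t *\<^sub>R d | t. True}" using meets[OF cr] by blast
  then have "c + be *\<^sub>R (y - x) \<in> bis N x y" using L by blast
  then have "N (c + be *\<^sub>R (y - x) - x) = N (c + be *\<^sub>R (y - x) - y)" unfolding bis_def by simp
  then have "be = 0" by (rule center_unique[OF lp ms])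
  then show ?thesis using be by simp
qed

lemma key2:
  assumes u: "u \<noteq> 0" and b: "\<beta> \<noteq> 0" and d: "d1 \<noteq> 0"
    and h1: "\<And>t. N (t *\<^sub>R d1 + (1/2) *\<^sub>R u) = N (t *\<^sub>R d1 + (-1/2) *\<^sub>R u)"
    and h2: "\<And>t r. t * \<beta> = - r \<Longrightarrow> N (t *\<^sub>R d1 + (r + 1/2) *\<^sub>R u) = N (t *\<^sub>R d1 + (r - 1/2) *\<^sub>R u)"
  shows False
proof -
  have Nu: "N u > 0" using u nn[of u] nz[of u] by auto
  have Nd: "N d1 > 0" using d nn[of d1] nz[of d1] by auto
  define r where "r = min (1/2) (N u * \<bar>\<beta>\<bar> / (4 * N d1))"
  have r0: "r > 0" unfolding r_def using Nu Nd b by auto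
  have r1: "r < 1" unfolding r_def by auto
  have r2: "r \<le> N u * \<bar>\<beta>\<bar> / (4 * N d1)" unfolding r_def by auto
  then have r3: "4 * N d1 * r \<le> N u * \<bar>\<beta>\<bar>" using Nd by (simp add: field_simps)
  define t where "t = - r / \<beta>"
  have tb: "t * \<beta> = - r" unfolding t_def using b by simp
  have "N u \<le> 2 * N (t *\<^sub>R d1)"
    by (rule key1[OF u r0 r1 h1[of t] h2[OF tb]])
  then have A: "N u \<le> 2 * \<bar>t\<bar> * N d1" by (simp add: hom)
  have "\<bar>t\<bar> * \<bar>\<beta>\<bar> = r" using tb r0 by (metis abs_minus abs_mult abs_of_pos)
  from A have "N u * \<bar>\<beta>\<bar> \<le> 2 * (\<bar>t\<bar> * \<bar>\<beta>\<bar>) * N d1"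
    using mult_right_mono[OF A, of "\<bar>\<beta>\<bar>"] by (simp add: algebra_simps)
  then have "N u * \<bar>\<beta>\<bar> \<le> 2 * r * N d1" using \<open>\<bar>t\<bar> * \<bar>\<beta>\<bar> = r\<close> by simp
  moreover have "2 * r * N d1 = 2 * (N d1 * r)" "4 * N d1 * r = 4 * (N d1 * r)" by (simp_all add: algebra_simps)
  moreover have "N d1 * r > 0" using r0 Nd by simp
  ultimately have "N u * \<bar>\<beta>\<bar> \<le> 0" using r3 by linarith
  moreover have "N u * \<bar>\<beta>\<bar> > 0" using Nu b by simp
  ultimately show False by simp
qed

lemma reparam:
  fixes d p m :: "real^2"
  assumes "m = p + t0 *\<^sub>R d"
  shows "{p + t *\<^sub>R d | t. True} = {m + t *\<^sub>R d | t. True}"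
proof (intro set_eqI iffI)
  fix z assume "z \<in> {p + t *\<^sub>R d | t. True}"
  then obtain t where "z = p + t *\<^sub>R d" by blast
  then have "z = m + (t - t0) *\<^sub>R d" using assms by (simp add: algebra_simps)
  then show "z \<in> {m + t *\<^sub>R d | t. True}" by blast
next
  fix z assume "z \<in> {m + t *\<^sub>R d | t. True}"
  then obtain t where "z = m + t *\<^sub>R d" by blast
  then have "z = p + (t0 + t) *\<^sub>R d" using assms by (simp add: algebra_simps)
  then show "z \<in> {p + t *\<^sub>R d | t. True}" by blast
qed

lemma unique_line:
  assumes xy: "x \<noteq> y" and l1: "is_line L1" "L1 \<subseteq> bis N x y" and l2: "is_line L2" "L2 \<subseteq> bis N x y"
  shows "L1 = L2"
proof -
  define u where "u = y - x"
  define m where "m = x + (1/2) *\<^sub>R u"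
  have u: "u \<noteq> 0" "y - x \<noteq> 0" using xy u_def by auto
  obtain p1 d1 where d1: "d1 \<noteq> 0" and L1: "L1 = {p1 + t *\<^sub>R d1 | t. True}" using l1 unfolding is_line_def by blast
  obtain p2 d2 where d2: "d2 \<noteq> 0" and L2: "L2 = {p2 + t *\<^sub>R d2 | t. True}" using l2 unfolding is_line_def by blast
  have "m \<in> L1" using through_m[OF u(2) d1] l1(2) L1 unfolding m_def u_def by simp
  then obtain t1 where "m = p1 + t1 *\<^sub>R d1" using L1 by blast
  then have L1': "L1 = {m + t *\<^sub>R d1 | t. True}" using L1 reparam by blast
  have "m \<in> L2" using through_m[OF u(2) d2] l2(2) L2 unfolding m_def u_def by simp
  then obtain t2 where "m = p2 + t2 *\<^sub>R d2" using L2 by blast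
  then have L2': "L2 = {m + t *\<^sub>R d2 | t. True}" using L2 reparam by blast
  have B1: "m + t *\<^sub>R d1 \<in> bis N x y" for t using l1(2) L1' by blast
  have B2: "m + t *\<^sub>R d2 \<in> bis N x y" for t using l2(2) L2' by blast
  show ?thesis
  proof (cases "cross d1 d2 = 0")
    case True
    then obtain k where k: "d2 = k *\<^sub>R d1" using par d1 by blast
    then have k0: "k \<noteq> 0" using d2 by auto
    show ?thesis unfolding L1' L2'
    proof (intro set_eqI iffI)
      fix z assume "z \<in> {m + t *\<^sub>R d1 | t. True}"
      then obtain t where "z = m + t *\<^sub>R d1" by blast
      then have "z = m + (t / k) *\<^sub>R d2" using k k0 by simp
      then show "z \<in> {m + t *\<^sub>R d2 | t. True}" by blast
    next
      fix z assume "z \<in> {m + t *\<^sub>R d2 | t. True}"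
      then obtain t where "z = m + t *\<^sub>R d2" by blast
      then have "z = m + (t * k) *\<^sub>R d1" using k by simp
      then show "z \<in> {m + t *\<^sub>R d1 | t. True}" by blast
    qed
  next
    case False
    have cr: "cross d2 u \<noteq> 0" using transversal[OF u(2) d2] l2(2) L2 u_def by simp
    define al where "al = cross d1 u / cross d2 u"
    define be where "be = cross d2 d1 / cross d2 u"
    have dec: "d1 = al *\<^sub>R d2 + be *\<^sub>R u" unfolding al_def be_def by (rule decomp[OF cr])
    have "cross d2 d1 \<noteq> 0" using False by (simp add: cross_def algebra_simps)
    then have b: "be \<noteq> 0" unfolding be_def using cr by simp
    have yx: "y = x + u" unfolding u_def by simp
    have False
    proof (rule key2[OF u(1) b d1])
      fix t
      have h: "N (m + t *\<^sub>R d1 - x) = N (m + t *\<^sub>R d1 - y)" using B1[of t] unfolding bis_def by simp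
      have e1: "m + t *\<^sub>R d1 - x = t *\<^sub>R d1 + (1/2) *\<^sub>R u" unfolding m_def by (simp add: algebra_simps)
      have e2: "m + t *\<^sub>R d1 - y = t *\<^sub>R d1 + (-1/2) *\<^sub>R u" unfolding m_def yx by (simp add: algebra_simps)
      show "N (t *\<^sub>R d1 + (1/2) *\<^sub>R u) = N (t *\<^sub>R d1 + (-1/2) *\<^sub>R u)" using h unfolding e1 e2 .
    next
      fix t r assume tb: "t * be = - r"
      have "t *\<^sub>R d1 = (t * al) *\<^sub>R d2 + (t * be) *\<^sub>R u" by (subst dec) (simp add: algebra_simps)
      then have z: "m + (t * al) *\<^sub>R d2 = m + t *\<^sub>R d1 + r *\<^sub>R u" using tb by (simp add: algebra_simps)
      have h: "N (m + (t * al) *\<^sub>R d2 - x) = N (m + (t * al) *\<^sub>R d2 - y)" using B2[of "t * al"] unfolding bis_def by simp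
      have e1: "m + t *\<^sub>R d1 + r *\<^sub>R u - x = t *\<^sub>R d1 + (r + 1/2) *\<^sub>R u" unfolding m_def by (simp add: algebra_simps)
      have e2: "m + t *\<^sub>R d1 + r *\<^sub>R u - y = t *\<^sub>R d1 + (r - 1/2) *\<^sub>R u" unfolding m_def yx by (simp add: algebra_simps)
      show "N (t *\<^sub>R d1 + (r + 1/2) *\<^sub>R u) = N (t *\<^sub>R d1 + (r - 1/2) *\<^sub>R u)" using h unfolding z e1 e2 .
    qed
    then show ?thesis by simp
  qed
qed

lemma part2:
  assumes xy: "x \<noteq> y" and l: "is_line L" "L \<subseteq> bis N x y"
    and lp1: "lam1 > 0" and lp2: "lam2 > 0"
    and ms1: "maximal_segment x y (ncircle N c1 lam1)" and ms2: "maximal_segment x y (ncircle N c2 lam2)"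
    and ne: "ncircle N c1 lam1 \<noteq> ncircle N c2 lam2"
  shows "L = line_through c1 c2"
proof -
  have u: "y - x \<noteq> 0" using xy by auto
  obtain p d where d: "d \<noteq> 0" and L: "L = {p + t *\<^sub>R d | t. True}" using l unfolding is_line_def by blast
  have "c1 \<in> L" using center_on_L[OF u d _ lp1 ms1] l(2) L by simp
  then obtain t1 where t1: "c1 = p + t1 *\<^sub>R d" using L by blast
  have "c2 \<in> L" using center_on_L[OF u d _ lp2 ms2] l(2) L by simp
  then obtain t2 where t2: "c2 = p + t2 *\<^sub>R d" using L by blast
  have x1: "N (x - c1) = lam1" using ms1 circ[OF lp1] unfolding maximal_segment_def by auto
  have x2: "N (x - c2) = lam2" using ms2 circ[OF lp2] unfolding maximal_segment_def by auto
  have "c1 \<noteq> c2"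
  proof
    assume "c1 = c2"
    then have "lam1 = lam2" using x1 x2 by simp
    then show False using ne \<open>c1 = c2\<close> by simp
  qed
  then have tne: "t2 - t1 \<noteq> 0" using t1 t2 by auto
  have c21: "c2 - c1 = (t2 - t1) *\<^sub>R d" using t1 t2 by (simp add: algebra_simps)
  show ?thesis unfolding L line_through_def c21
  proof (intro set_eqI iffI)
    fix z assume "z \<in> {p + t *\<^sub>R d | t. True}"
    then obtain t where "z = p + t *\<^sub>R d" by blast
    then have "z = c1 + (t - t1) *\<^sub>R d" using t1 by (simp add: add.assoc flip: scaleR_add_left)
    moreover have "((t - t1) / (t2 - t1)) *\<^sub>R ((t2 - t1) *\<^sub>R d) = (t - t1) *\<^sub>R d" using tne by simp
    ultimately show "z \<in> {c1 + t *\<^sub>R ((t2 - t1) *\<^sub>R d) | t. True}" by (metis (mono_tags, lifting) mem_Collect_eq)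
  next
    fix z assume "z \<in> {c1 + t *\<^sub>R ((t2 - t1) *\<^sub>R d) | t. True}"
    then obtain t where "z = c1 + t *\<^sub>R ((t2 - t1) *\<^sub>R d)" by blast
    then have "z = p + (t1 + t * (t2 - t1)) *\<^sub>R d" using t1 by (simp add: add.assoc flip: scaleR_add_left)
    then show "z \<in> {p + t *\<^sub>R d | t. True}" by blast
  qed
qed

end

theorem corollary2p1:
  fixes N :: "real^2 \<Rightarrow> real" and x y :: "real^2"
  assumes "is_norm N" and "x \<noteq> y"
  shows "(\<forall>L1 L2. is_line L1 \<and> L1 \<subseteq> bis N x y \<and> is_line L2 \<and> L2 \<subseteq> bis N x y
            \<longrightarrow> L1 = L2)
       \<and> (parallel_to_segment_of_S N x y \<longrightarrow>
           (\<forall>L c1 c2 lam1 lam2.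
              is_line L \<and> L \<subseteq> bis N x y \<and>
              lam1 > 0 \<and> lam2 > 0 \<and>
              maximal_segment x y (ncircle N c1 lam1) \<and>
              maximal_segment x y (ncircle N c2 lam2) \<and>
              ncircle N c1 lam1 \<noteq> ncircle N c2 lam2
              \<longrightarrow> L = line_through c1 c2))"
proof -
  interpret nrm N by unfold_locales (rule assms(1))
  show ?thesis
  proof (intro conjI allI impI)
    fix L1 L2 assume h: "is_line L1 \<and> L1 \<subseteq> bis N x y \<and> is_line L2 \<and> L2 \<subseteq> bis N x y"
    show "L1 = L2" by (rule unique_line[OF assms(2)]) (use h in simp_all)
  next
    fix L c1 c2 lam1 lam2
    assume h: "is_line L \<and> L \<subseteq> bis N x y \<and>
              lam1 > 0 \<and> lam2 > 0 \<and>
              maximal_segment x y (ncircle N c1 lam1) \<and>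
              maximal_segment x y (ncircle N c2 lam2) \<and>
              ncircle N c1 lam1 \<noteq> ncircle N c2 lam2"
    from h have a1: "is_line L" and a2: "L \<subseteq> bis N x y" and a3: "lam1 > 0" and a4: "lam2 > 0"
      and a5: "maximal_segment x y (ncircle N c1 lam1)" and a6: "maximal_segment x y (ncircle N c2 lam2)"
      and a7: "ncircle N c1 lam1 \<noteq> ncircle N c2 lam2" by simp_all
    show "L = line_through c1 c2" by (rule part2[OF assms(2) a1 a2 a3 a4 a5 a6 a7])
  qed
qed

end
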